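(* Let $(\lambda,\mu,\mu')$ be an admissible triplet with associated weights $\mu^*,\mu'^*$. Then $(\lambda,\mu,\mu')$ is of type 0, i.e. $\langle\lambda+\mu'^*,\alpha_n^\vee\rangle=\lambda_{n-1}+\lambda_n+\mu'^*_{n-1}+\mu'^*_n\ge0$, if and only if the triplet $(\lambda,\mu'^*,\mu^* )$ is admissible.
   Context: Type $D_n$ weights are $(\lambda_1,\dots,\lambda_n)$; $\langle\lambda,\alpha_j^\vee\rangle=\lambda_j-\lambda_{j+1}$ for $j<n$ and $\langle\lambda,\alpha_n^\vee\rangle=\lambda_{n-1}+\lambda_n$; $P_+=\{\lambda_j\in\frac12\mathbb Z,\lambda_j-\lambda_k\in\mathbb Z,\lambda_1\ge\dots\ge\lambda_n,\lambda_{n-1}+\lambda_n\ge0\}$; $P[S]=\{(\pm\frac12,\dots,\pm\frac12)\}$. For $k\ge0$, $\Delta^k$ is the set of sums $\mu_1+\dots+\mu_k$ over tuples $(\mu_1,\dots,\mu_k)\in P[S]^k$ all of whose partial sums lie in $P_+$ ($\Delta^0=\{0\}$). A triplet $(\lambda,\mu,\mu')$ is admissible if $\lambda\in\Delta^k$ for some $k\ge0$, $\mu,\mu'\in P[S]$, and $\lambda+\mu,\ \lambda+\mu+\mu'\in P_+$. A free interval of the triplet is a subset $\mathrm{Fr}\subset\{1,\dots,n\}$, maximal with respect to inclusion, such that $\lambda_j$ is constant on $\mathrm{Fr}$ and $\mu_j\mu'_j<0$ for all $j\in\mathrm{Fr}$. The weights $\mu^*,\mu'^*$: outside free intervals they agree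 with $\mu,\mu'$; on each free interval $\mathrm{Fr}$, with $b$ the number of $j\in\mathrm{Fr}$ with $\mu'_j=+\frac12$, $\mu'^*_j=+\frac12$ on the $b$ smallest elements of $\mathrm{Fr}$ and $-\frac12$ on the rest, and $\mu^*_j=-\mu'^*_j$ on $\mathrm{Fr}$. *)

theory Defs
  imports Complex_Main "HOL-Library.Function_Algebras"
begin

text \<open>Type D_n weights are functions nat => real, 1-based, supported on {1..n}
  (value 0 outside {1..n}).\<close>

definition Pplus :: "nat \<Rightarrow> (nat \<Rightarrow> real) set" where
  "Pplus n = {lam. (\<forall>j\<in>{1..n}. 2 * lam j \<in> \<int>)
      \<and> (\<forall>j\<in>{1..n}. \<forall>k\<in>{1..n}. lam j - lam k \<in> \<int>)
      \<and> (\<forall>j. 1 \<le> j \<and> j < n \<longrightarrow> lam (j + 1) \<le> lam j)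
      \<and> lam (n - 1) + lam n \<ge> 0
      \<and> (\<forall>j. j \<notin> {1..n} \<longrightarrow> lam j = 0)}"

definition PS :: "nat \<Rightarrow> (nat \<Rightarrow> real) set" where
  "PS n = {mu. (\<forall>j\<in>{1..n}. mu j = 1/2 \<or> mu j = -1/2)
      \<and> (\<forall>j. j \<notin> {1..n} \<longrightarrow> mu j = 0)}"

definition Delta :: "nat \<Rightarrow> nat \<Rightarrow> (nat \<Rightarrow> real) set" where
  "Delta n k = {sum_list ms | ms. length ms = k \<and> set ms \<subseteq> PS n
      \<and> (\<forall>i\<in>{1..k}. sum_list (take i ms) \<in> Pplus n)}"

definition coroot_n :: "nat \<Rightarrow> (nat \<Rightarrow> real) \<Rightarrow> real" where
  "coroot_n n lam = lam (n - 1) + lam n"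

definition admissible :: "nat \<Rightarrow> (nat \<Rightarrow> real) \<Rightarrow> (nat \<Rightarrow> real) \<Rightarrow> (nat \<Rightarrow> real) \<Rightarrow> bool" where
  "admissible n lam mu mu' \<longleftrightarrow> (\<exists>k. lam \<in> Delta n k) \<and> mu \<in> PS n \<and> mu' \<in> PS n
      \<and> lam + mu \<in> Pplus n \<and> lam + mu + mu' \<in> Pplus n"

definition free_cond :: "(nat \<Rightarrow> real) \<Rightarrow> (nat \<Rightarrow> real) \<Rightarrow> (nat \<Rightarrow> real) \<Rightarrow> nat set \<Rightarrow> bool" where
  "free_cond lam mu mu' F \<longleftrightarrow> (\<forall>i\<in>F. \<forall>j\<in>F. lam i = lam j) \<and> (\<forall>j\<in>F. mu j * mu' j < 0)"

definition free_interval :: "nat \<Rightarrow> (nat \<Rightarrow> real) \<Rightarrow> (nat \<Rightarrow> real) \<Rightarrow> (nat \<Rightarrow> real) \<Rightarrow> nat set \<Rightarrow> bool" where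
  "free_interval n lam mu mu' F \<longleftrightarrow> F \<subseteq> {1..n} \<and> free_cond lam mu mu' F
      \<and> (\<forall>G. F \<subseteq> G \<and> G \<subseteq> {1..n} \<and> free_cond lam mu mu' G \<longrightarrow> G = F)"

definition mu'_star :: "nat \<Rightarrow> (nat \<Rightarrow> real) \<Rightarrow> (nat \<Rightarrow> real) \<Rightarrow> (nat \<Rightarrow> real) \<Rightarrow> nat \<Rightarrow> real" where
  "mu'_star n lam mu mu' j =
    (if \<exists>F. free_interval n lam mu mu' F \<and> j \<in> F then
       (let F = (THE F. free_interval n lam mu mu' F \<and> j \<in> F);
            b = card {i\<in>F. mu' i = 1/2}
        in if card {i\<in>F. i < j} < b then 1/2 else -1/2)
     else mu' j)"

definition mu_star :: "nat \<Rightarrow> (nat \<Rightarrow> real) \<Rightarrow> (nat \<Rightarrow> real) \<Rightarrow> (nat \<Rightarrow> real) \<Rightarrow> nat \<Rightarrow> real" where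
  "mu_star n lam mu mu' j =
    (if \<exists>F. free_interval n lam mu mu' F \<and> j \<in> F then - mu'_star n lam mu mu' j else mu j)"

end

theory Submission
  imports Defs
begin

definition FF :: "nat \<Rightarrow> (nat \<Rightarrow> real) \<Rightarrow> (nat \<Rightarrow> real) \<Rightarrow> (nat \<Rightarrow> real) \<Rightarrow> nat \<Rightarrow> nat set" where
  "FF n lam mu mu' j = {i\<in>{1..n}. lam i = lam j \<and> mu i * mu' i < 0}"

lemma fi_unique:
  assumes "free_interval n lam mu mu' F" "j \<in> F"
  shows "F = FF n lam mu mu' j"
proof -
  have sub: "F \<subseteq> FF n lam mu mu' j"
    using assms unfolding free_interval_def free_cond_def FF_def by blast
  have "free_cond lam mu mu' (FF n lam mu mu' j)"
    unfolding free_cond_def FF_def by auto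
  moreover have "FF n lam mu mu' j \<subseteq> {1..n}" unfolding FF_def by auto
  ultimately show ?thesis using assms(1) sub unfolding free_interval_def by blast
qed

lemma fi_exists:
  assumes "j \<in> {1..n}" "mu j * mu' j < 0"
  shows "free_interval n lam mu mu' (FF n lam mu mu' j)" "j \<in> FF n lam mu mu' j"
proof -
  show "j \<in> FF n lam mu mu' j" using assms unfolding FF_def by auto
  have c: "free_cond lam mu mu' (FF n lam mu mu' j)"
    unfolding free_cond_def FF_def by auto
  have m: "G = FF n lam mu mu' j" if "FF n lam mu mu' j \<subseteq> G" "G \<subseteq> {1..n}" "free_cond lam mu mu' G" for G
  proof
    show "FF n lam mu mu' j \<subseteq> G" by fact
    show "G \<subseteq> FF n lam mu mu' j"
    proof
      fix i assume "i \<in> G"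
      moreover have "j \<in> G" using that(1) \<open>j \<in> FF n lam mu mu' j\<close> by blast
      ultimately show "i \<in> FF n lam mu mu' j" using that(2,3) unfolding free_cond_def FF_def by blast
    qed
  qed
  have "FF n lam mu mu' j \<subseteq> {1..n}" unfolding FF_def by blast
  then show "free_interval n lam mu mu' (FF n lam mu mu' j)"
    unfolding free_interval_def using c m by blast
qed

lemma ex_iff:
  "(\<exists>F. free_interval n lam mu mu' F \<and> j \<in> F) \<longleftrightarrow> (j \<in> {1..n} \<and> mu j * mu' j < 0)"
proof
  assume "\<exists>F. free_interval n lam mu mu' F \<and> j \<in> F"
  then obtain F where F: "free_interval n lam mu mu' F" "j \<in> F" by blast
  then have "F \<subseteq> {1..n}" "free_cond lam mu mu' F" unfolding free_interval_def by blast+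
  then show "j \<in> {1..n} \<and> mu j * mu' j < 0"
    using F(2) unfolding free_cond_def by blast
next
  assume "j \<in> {1..n} \<and> mu j * mu' j < 0"
  then have "free_interval n lam mu mu' (FF n lam mu mu' j)" "j \<in> FF n lam mu mu' j"
    using fi_exists[of j n mu mu' lam] by blast+
  then show "\<exists>F. free_interval n lam mu mu' F \<and> j \<in> F" by blast
qed

lemma the_eq:
  assumes "j \<in> {1..n}" "mu j * mu' j < 0"
  shows "(THE F. free_interval n lam mu mu' F \<and> j \<in> F) = FF n lam mu mu' j"
proof (rule the_equality)
  show "free_interval n lam mu mu' (FF n lam mu mu' j) \<and> j \<in> FF n lam mu mu' j"
    using fi_exists[OF assms(1), of mu mu' lam] assms(2) by blast
  show "\<And>F. free_interval n lam mu mu' F \<and> j \<in> F \<Longrightarrow> F = FF n lam mu mu' j"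
    using fi_unique by blast
qed

lemma ms_eq:
  "mu'_star n lam mu mu' j = (if j \<in> {1..n} \<and> mu j * mu' j < 0 then
     (if card {i\<in>FF n lam mu mu' j. i < j} < card {i\<in>FF n lam mu mu' j. mu' i = 1/2} then 1/2 else -1/2)
     else mu' j)"
proof (cases "j \<in> {1..n} \<and> mu j * mu' j < 0")
  case True
  then have e: "(THE F. free_interval n lam mu mu' F \<and> j \<in> F) = FF n lam mu mu' j"
    using the_eq by blast
  show ?thesis unfolding mu'_star_def ex_iff Let_def e using True by (simp only: if_True)
next
  case False
  then show ?thesis unfolding mu'_star_def ex_iff by (simp only: if_False)
qed

lemma ms2_eq:
  "mu_star n lam mu mu' j = (if j \<in> {1..n} \<and> mu j * mu' j < 0 then - mu'_star n lam mu mu' j else mu j)"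
  unfolding mu_star_def ex_iff by (rule refl)

lemma half_cases: "(x::real) = 1/2 \<or> x = -1/2 \<Longrightarrow> (y::real) = 1/2 \<or> y = -1/2 \<Longrightarrow> x * y < 0 \<Longrightarrow> x + y = 0"
  by (elim disjE) auto
lemma half_cases2: "(x::real) = 1/2 \<or> x = -1/2 \<Longrightarrow> (y::real) = 1/2 \<or> y = -1/2 \<Longrightarrow> \<not> x * y < 0 \<Longrightarrow> x = y"
  by (elim disjE) auto
lemma neg_half: "(x::real) = 1/2 \<or> x = -1/2 \<Longrightarrow> -x = 1/2 \<or> -x = -1/2"
  by (elim disjE; hypsubst; simp)

lemma two_half: "(x::real) = 1/2 \<or> x = -1/2 \<Longrightarrow> 2 * x \<in> \<int>"
  by (elim disjE; hypsubst; simp)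

lemma int_pos: "(x::real) \<in> \<int> \<Longrightarrow> x > 0 \<Longrightarrow> x \<ge> 1"
proof -
  assume "x \<in> \<int>" "x > 0"
  then obtain m where m: "x = of_int m" by (auto elim: Ints_cases)
  then have "m > 0" using \<open>x > 0\<close> by simp
  then have "m \<ge> 1" by simp
  then show "x \<ge> 1" using m by simp
qed
lemma half_diff: "(x::real) = 1/2 \<or> x = -1/2 \<Longrightarrow> (y::real) = 1/2 \<or> y = -1/2 \<Longrightarrow> x - y \<in> \<int>"
  by (elim disjE; hypsubst; simp)

lemma delta_pplus:
  assumes "lam \<in> Delta n k" shows "lam \<in> Pplus n"
proof -
  obtain ms where ms: "lam = sum_list ms" "length ms = k" "\<forall>i\<in>{1..k}. sum_list (take i ms) \<in> Pplus n"
    using assms unfolding Delta_def by blast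
  show ?thesis
  proof (cases "k = 0")
    case True
    then have "lam = 0" using ms by simp
    then show ?thesis unfolding Pplus_def by simp
  next
    case False
    then have "k \<in> {1..k}" by simp
    then have "sum_list (take k ms) \<in> Pplus n" using ms(3) by blast
    then show ?thesis using ms(1,2) by simp
  qed
qed

theorem corollary6p1:
  fixes n :: nat and lam mu mu' :: "nat \<Rightarrow> real"
  assumes "2 \<le> n"
    and "admissible n lam mu mu'"
  shows "coroot_n n (lam + mu'_star n lam mu mu') \<ge> 0
     \<longleftrightarrow> admissible n lam (mu'_star n lam mu mu') (mu_star n lam mu mu')"
proof -
  define ms where "ms = mu'_star n lam mu mu'"
  define ms2 where "ms2 = mu_star n lam mu mu'"
  obtain k where lk: "lam \<in> Delta n k" and mu: "mu \<in> PS n" and mu': "mu' \<in> PS n"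
    and p1: "lam + mu \<in> Pplus n" and p2: "lam + mu + mu' \<in> Pplus n"
    using assms(2) unfolding admissible_def by blast
  have lp: "lam \<in> Pplus n" using delta_pplus[OF lk] .
  have muv: "\<And>j. j \<in> {1..n} \<Longrightarrow> mu j = 1/2 \<or> mu j = -1/2"
   and mu0: "\<And>j. j \<notin> {1..n} \<Longrightarrow> mu j = 0" using mu unfolding PS_def by auto
  have mu'v: "\<And>j. j \<in> {1..n} \<Longrightarrow> mu' j = 1/2 \<or> mu' j = -1/2"
   and mu'0: "\<And>j. j \<notin> {1..n} \<Longrightarrow> mu' j = 0" using mu' unfolding PS_def by auto
  have msv: "\<And>j. j \<in> {1..n} \<Longrightarrow> ms j = 1/2 \<or> ms j = -1/2"
    unfolding ms_def ms_eq using mu'v by auto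
  have ms0: "\<And>j. j \<notin> {1..n} \<Longrightarrow> ms j = 0"
    unfolding ms_def ms_eq using mu'0 by auto
  have ms2v: "ms2 j = 1/2 \<or> ms2 j = -1/2" if jn: "j \<in> {1..n}" for j
  proof (cases "mu j * mu' j < 0")
    case True
    then have "ms2 j = - ms j" unfolding ms2_def ms2_eq ms_def using jn by simp
    then show ?thesis using neg_half[OF msv[OF jn]] by simp
  next
    case False
    then have "ms2 j = mu j" unfolding ms2_def ms2_eq by simp
    then show ?thesis using muv[OF jn] by simp
  qed
  have ms20: "\<And>j. j \<notin> {1..n} \<Longrightarrow> ms2 j = 0"
    unfolding ms2_def ms2_eq using mu0 by auto
  have msPS: "ms \<in> PS n" using msv ms0 unfolding PS_def by auto
  have ms2PS: "ms2 \<in> PS n" using ms2v ms20 unfolding PS_def by auto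
  have sumeq: "lam + ms + ms2 = lam + mu + mu'"
  proof
    fix j
    show "(lam + ms + ms2) j = (lam + mu + mu') j"
    proof (cases "j \<in> {1..n} \<and> mu j * mu' j < 0")
      case True
      then have "mu j + mu' j = 0" using half_cases muv mu'v by blast
      then show ?thesis using True unfolding ms2_def ms2_eq ms_def by simp
    next
      case False
      have "ms2 j = mu j" unfolding ms2_def ms2_eq using False by (simp only: if_False)
      moreover have "ms j = mu' j" unfolding ms_def ms_eq using False by (simp only: if_False)
      ultimately show ?thesis by simp
    qed
  qed
  have lP: "(\<forall>j\<in>{1..n}. 2 * lam j \<in> \<int>)" "(\<forall>j\<in>{1..n}. \<forall>k\<in>{1..n}. lam j - lam k \<in> \<int>)"
      "(\<forall>j. 1 \<le> j \<and> j < n \<longrightarrow> lam (j + 1) \<le> lam j)" "(\<forall>j. j \<notin> {1..n} \<longrightarrow> lam j = 0)"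
    using lp unfolding Pplus_def by auto
  have p1m: "\<And>j. 1 \<le> j \<Longrightarrow> j < n \<Longrightarrow> lam (j+1) + mu (j+1) \<le> lam j + mu j"
    using p1 unfolding Pplus_def by auto
  have p2m: "\<And>j. 1 \<le> j \<Longrightarrow> j < n \<Longrightarrow> lam (j+1) + mu (j+1) + mu' (j+1) \<le> lam j + mu j + mu' j"
    using p2 unfolding Pplus_def by auto
  have mono: "lam (j + 1) + ms (j+1) \<le> lam j + ms j" if j: "1 \<le> j" "j < n" for j
  proof -
    have jn: "j \<in> {1..n}" "j+1 \<in> {1..n}" using j by auto
    have le: "lam (j+1) \<le> lam j" using lP(3) j by auto
    show ?thesis
    proof (cases "lam (j+1) < lam j")
      case True
      have "lam j - lam (j+1) \<in> \<int>" using lP(2) jn by auto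
      then have "lam j - lam (j+1) \<ge> 1" using int_pos True by simp
      then show ?thesis using msv[OF jn(1)] msv[OF jn(2)] by auto
    next
      case False
      then have eq: "lam (j+1) = lam j" using le by simp
      have a1: "mu (j+1) \<le> mu j" using p1m[OF j] eq by simp
      have a2: "mu (j+1) + mu' (j+1) \<le> mu j + mu' j" using p2m[OF j] eq by simp
      have FFeq: "FF n lam mu mu' (j+1) = FF n lam mu mu' j" unfolding FF_def using eq by simp
      show ?thesis
      proof (cases "mu j * mu' j < 0")
        case A: True
        then have s1: "mu j + mu' j = 0" using half_cases muv mu'v jn by blast
        show ?thesis
        proof (cases "mu (j+1) * mu' (j+1) < 0")
          case B: True
          define F where "F = FF n lam mu mu' j"
          have fin: "finite F" unfolding F_def FF_def by auto
          have "card {i\<in>F. i < j} \<le> card {i\<in>F. i < j+1}"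
            by (rule card_mono) (use fin in auto)
          then show ?thesis using A B jn eq unfolding ms_def ms_eq FFeq F_def[symmetric] by auto
        next
          case B: False
          then have "mu (j+1) = mu' (j+1)" using half_cases2 muv mu'v jn by blast
          then have "mu' (j+1) = -1/2" using a2 s1 mu'v[OF jn(2)] by auto
          then show ?thesis using B eq msv[OF jn(1)] unfolding ms_def ms_eq by auto
        qed
      next
        case A: False
        then have s1: "mu j = mu' j" using half_cases2 muv mu'v jn by blast
        show ?thesis
        proof (cases "mu (j+1) * mu' (j+1) < 0")
          case B: True
          then have "mu (j+1) + mu' (j+1) = 0" using half_cases muv mu'v jn by blast
          then have "mu' j = 1/2" using a2 s1 mu'v[OF jn(1)] by auto
          then show ?thesis using A eq msv[OF jn(2)] unfolding ms_def ms_eq by auto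
        next
          case B: False
          then have "mu (j+1) = mu' (j+1)" using half_cases2 muv mu'v jn by blast
          then have "mu' (j+1) \<le> mu' j" using a2 s1 by auto
          then show ?thesis using A B eq unfolding ms_def ms_eq by auto
        qed
      qed
    qed
  qed
  have "coroot_n n (lam + ms) \<ge> 0 \<longleftrightarrow> lam + ms \<in> Pplus n"
  proof
    assume c: "coroot_n n (lam + ms) \<ge> 0"
    have i1: "\<forall>j\<in>{1..n}. 2 * (lam + ms) j \<in> \<int>"
    proof
      fix j assume jn: "j \<in> {1..n}"
      have "2 * ms j \<in> \<int>" using two_half[OF msv[OF jn]] .
      then show "2 * (lam + ms) j \<in> \<int>" using lP(1) jn by (simp add: distrib_left)
    qed
    have i2: "\<forall>j\<in>{1..n}. \<forall>k\<in>{1..n}. (lam + ms) j - (lam + ms) k \<in> \<int>"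
    proof (intro ballI)
      fix j k assume jn: "j \<in> {1..n}" "k \<in> {1..n}"
      have "ms j - ms k \<in> \<int>" using half_diff msv jn by blast
      moreover have "lam j - lam k \<in> \<int>" using lP(2) jn by blast
      ultimately have "(ms j - ms k) + (lam j - lam k) \<in> \<int>" by (rule Ints_add)
      then show "(lam + ms) j - (lam + ms) k \<in> \<int>" by (simp add: algebra_simps)
    qed
    show "lam + ms \<in> Pplus n"
      unfolding Pplus_def using i1 i2 mono c lP(4) ms0 unfolding coroot_n_def by auto
  next
    assume "lam + ms \<in> Pplus n"
    then show "coroot_n n (lam + ms) \<ge> 0" unfolding Pplus_def coroot_n_def by auto
  qed
  also have "\<dots> \<longleftrightarrow> admissible n lam ms ms2"
    proof -
    have "lam + ms + ms2 \<in> Pplus n" unfolding sumeq by (rule p2)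
    then show ?thesis unfolding admissible_def using lk msPS ms2PS by blast
  qed
  finally show ?thesis unfolding ms_def ms2_def .
qed

end
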